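(* Let $f(\alpha,\beta)$, $g(\alpha,\beta)$, $h(\alpha)$ be $2\pi$-periodic in each argument and suppose there is a constant $c\neq0$ such that for all $\alpha,\beta$: $f(\alpha,\beta)=-f(\beta,\alpha)$, $g(\alpha,\beta)=-g(\beta,\alpha)$, $h(\alpha)h(\alpha+\pi)=c$, $f(\alpha,\beta)f(\alpha+\pi,\beta)=-c$, and $g(\alpha,\beta)=c^{-1}f(\alpha,\beta)h(\alpha)h(\beta)$. Then the quad-equation $$f(\theta,\theta')x_{B'}-g(\theta,\theta')x_B=i\big(h(\theta')x_{W'}-h(\theta)x_W\big)$$ is 3D-consistent (in the sense described in the context) if and only if for all $\alpha,\beta,\gamma$ $$f(\alpha,\beta)h(\alpha)h(\beta)+f(\beta,\gamma)h(\beta)h(\gamma)+f(\gamma,\alpha)h(\gamma)h(\alpha)=f(\alpha,\beta)f(\beta,\gamma)f(\gamma,\alpha),$$ which is equivalent to $$g(\alpha,\beta)+g(\beta,\gamma)+g(\gamma,\alpha)=c^{-1}f(\alpha,\beta)f(\beta,\gamma)f(\gamma,\alpha).$$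
   Context: The quad-equation is imposed on a rhombus with black vertices $B,B'$ and white vertices $W,W'$, where $\theta,\theta'$ are the labels of the edges $B\to W$, $B\to W'$, i.e. $e^{i\theta}=W-B$, $e^{i\theta'}=W'-B$ as points in $\mathbb C$. Under the stated symmetry conditions this equation is the same (up to a nonzero factor) whichever black vertex is taken as $B$ and in whichever order $W,W'$ are taken. 3D-consistency: consider a combinatorial cube with vertices $x_I$, $I\subseteq\{1,2,3\}$, placed at formal points $P_I=\sum_{i\in I}e^{i\alpha_i}$ with $(\alpha_1,\alpha_2,\alpha_3)=(\alpha,\beta,\gamma)$; $x_I$ is black if $|I|$ is even and white otherwise, every edge joins a black and a white vertex, and the edge label $\theta$ of an edge from black $P$ to white $Q$ is defined by $e^{i\theta}=Q-P$. Impose the quad-equation on all six faces. For generic initial values $x_\emptyset,x_1,x_2,x_3$, the three faces containing $x_\emptyset$ determine $x_{12},x_{13},x_{23}$, and then each of the three faces containing $x_{123}$ determines a value of $x_{123}$. The equation is 3D-consistent if these three values of $x_{123}$ coincide for all initial data. *)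

theory Defs
  imports Complex_Main
begin

text \<open>Labels alpha, beta are non-degenerate if they are not congruent mod pi
  (i.e. the corresponding rhombus is non-degenerate).\<close>
definition nondeg :: "real \<Rightarrow> real \<Rightarrow> bool" where
  "nondeg a b \<longleftrightarrow> (\<forall>k::int. a - b \<noteq> of_int k * pi)"

text \<open>Edge label of an edge from black point P to white point Q: a real theta with
  exp(i theta) = Q - P (determined mod 2 pi; the functions used are 2pi-periodic).\<close>
definition edge_label :: "complex \<Rightarrow> complex \<Rightarrow> real" where
  "edge_label P Q = (SOME t. cis t = Q - P)"

text \<open>The quad-equation on a rhombus with black vertices B, B' and white vertices
  W, W' (positions), with values xB, xB', xW, xW'; theta, theta' are the labels of
  the edges B to W and B to W'.\<close>
definition quad_eq ::
  "(real \<Rightarrow> real \<Rightarrow> complex) \<Rightarrow> (real \<Rightarrow> real \<Rightarrow> complex) \<Rightarrow> (real \<Rightarrow> complex) \<Rightarrow>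
   complex \<Rightarrow> complex \<Rightarrow> complex \<Rightarrow> complex \<Rightarrow>
   complex \<Rightarrow> complex \<Rightarrow> complex \<Rightarrow> complex \<Rightarrow> bool" where
  "quad_eq f g h B B' W W' xB xB' xW xW' \<longleftrightarrow>
     (let t = edge_label B W; t' = edge_label B W' in
        f t t' * xB' - g t t' * xB = \<i> * (h t' * xW' - h t * xW))"

text \<open>3D-consistency on the cube with vertices at P_I = sum of cis(alpha_i), i in I.
  x0 = x_emptyset, x1, x2, x3 initial data; x12, x13, x23 determined by the faces
  containing x_emptyset; y1, y2, y3 are the values of x_123 determined by the faces
  containing x_1, x_2, x_3 respectively (together with x_123).\<close>
definition cube_consistent ::
  "(real \<Rightarrow> real \<Rightarrow> complex) \<Rightarrow> (real \<Rightarrow> real \<Rightarrow> complex) \<Rightarrow> (real \<Rightarrow> complex) \<Rightarrow>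
   real \<Rightarrow> real \<Rightarrow> real \<Rightarrow> bool" where
  "cube_consistent f g h a b c \<longleftrightarrow>
    (let P0 = 0; P1 = cis a; P2 = cis b; P3 = cis c;
         P12 = cis a + cis b; P13 = cis a + cis c; P23 = cis b + cis c;
         P123 = cis a + cis b + cis c in
     \<forall>x0 x1 x2 x3 x12 x13 x23 y1 y2 y3.
       quad_eq f g h P0 P12 P1 P2 x0 x12 x1 x2 \<and>
       quad_eq f g h P0 P13 P1 P3 x0 x13 x1 x3 \<and>
       quad_eq f g h P0 P23 P2 P3 x0 x23 x2 x3 \<and>
       quad_eq f g h P12 P13 P1 P123 x12 x13 x1 y1 \<and>
       quad_eq f g h P12 P23 P2 P123 x12 x23 x2 y2 \<and>
       quad_eq f g h P13 P23 P3 P123 x13 x23 x3 y3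
       \<longrightarrow> y1 = y2 \<and> y2 = y3)"

end

theory Submission
  imports Defs
begin

lemma label_ex:
  assumes "Q - P = cis th"
  shows "\<exists>k::int. edge_label P Q = th + 2 * pi * k"
proof -
  have "cis (edge_label P Q) = Q - P" unfolding edge_label_def
    by (rule someI_ex[of "\<lambda>t. cis t = Q - P"]) (rule exI[of _ th], simp add: assms)
  hence c: "cis (edge_label P Q) = cis th" using assms by simp
  have "Re (cis (edge_label P Q)) = Re (cis th)" "Im (cis (edge_label P Q)) = Im (cis th)"
    using c by simp_all
  hence "sin (edge_label P Q) = sin th \<and> cos (edge_label P Q) = cos th" by simp
  thus ?thesis using sin_cos_eq_iff by blast
qed

lemma per_int:
  fixes \<phi> :: "real \<Rightarrow> 'a"
  assumes "\<And>x. \<phi> (x + 2 * pi) = \<phi> x"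
  shows "\<phi> (x + 2 * pi * of_int k) = \<phi> x"
proof -
  have nat: "\<phi> (y + 2 * pi * of_nat n) = \<phi> y" for y n
  proof (induction n)
    case 0 then show ?case by simp
  next
    case (Suc n)
    have "y + 2 * pi * of_nat (Suc n) = (y + 2 * pi * of_nat n) + 2 * pi" by (simp add: algebra_simps)
    then have "\<phi> (y + 2 * pi * of_nat (Suc n)) = \<phi> (y + 2 * pi * of_nat n)" using assms[of "y + 2 * pi * of_nat n"] by (simp only:)
    then show ?case using Suc by simp
  qed
  show ?thesis
  proof (cases "k \<ge> 0")
    case True
    define n where "n = nat k"
    have kn: "(of_int k :: real) = of_nat n" using True by (simp add: n_def)
    have "\<phi> (x + 2 * pi * of_int k) = \<phi> (x + 2 * pi * of_nat n)" by (simp only: kn)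
    also have "\<dots> = \<phi> x" by (rule nat)
    finally show ?thesis .
  next
    case False
    define n where "n = nat (-k)"
    have kk: "(of_int k :: real) = - of_nat n" using False by (simp add: n_def)
    have xx: "x = (x + 2 * pi * of_int k) + 2 * pi * of_nat n" by (simp add: kk)
    have "\<phi> x = \<phi> ((x + 2 * pi * of_int k) + 2 * pi * of_nat n)" using xx by (rule arg_cong)
    also have "\<dots> = \<phi> (x + 2 * pi * of_int k)" by (rule nat)
    finally show ?thesis by (rule sym)
  qed
qed

lemma alg0:
  fixes c k j F1 F2 F3 Fad Fbpd Fapd Fapb Ha Hb Hd Hap Hbp x0 x1 x2 x3 x12 x13 x23 y1 y2 y3 :: complex
  assumes ck: "c*k = 1" and jj: "j*j = -1"
    and r: "Fad = - F3" "F2 * Fbpd = - c" "Fad * Fapd = - c" "F1 * Fapb = - c" "Ha * Hap = c" "Hb * Hbp = c"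
    and e1: "F1*x12 - k*F1*Ha*Hb*x0 = j*(Hb*x2 - Ha*x1)"
    and e2: "Fad*x13 - k*Fad*Ha*Hd*x0 = j*(Hd*x3 - Ha*x1)"
    and e3: "F2*x23 - k*F2*Hb*Hd*x0 = j*(Hd*x3 - Hb*x2)"
    and e4: "Fbpd*x13 - k*Fbpd*Hbp*Hd*x12 = j*(Hd*y1 - Hbp*x1)"
    and e5: "Fapd*x23 - k*Fapd*Hap*Hd*x12 = j*(Hd*y2 - Hap*x2)"
    and e6: "Fapb*x23 - k*Fapb*Hap*Hb*x13 = j*(Hb*y3 - Hap*x3)"
  shows "Ha*Hb*Hd*F1*F2*F3*(y1 - y2) = c * (F1*Ha*Hb + F2*Hb*Hd + F3*Hd*Ha - F1*F2*F3) * (Hb*x2 - Ha*x1)"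
    and "Ha*Hb*Hd*F1*F2*F3*(y2 - y3) = c * (F1*Ha*Hb + F2*Hb*Hd + F3*Hd*Ha - F1*F2*F3) * (Hd*x3 - Hb*x2)"
proof -
  have P1: "Hd*F1*F2*F3*Hb*y1 = c*(x1*(-Ha*Hb*F1 - Ha*Hd*F3 + F1*F2*F3) + x2*Hd*Hb*F3 + x3*Hd*Hb*F1)"
    using ck jj r e1 e2 e4 by algebra
  have P2: "Hd*F1*F2*F3*Ha*y2 = c*(x1*Hd*Ha*F2 + x2*(-Hb*Ha*F1 - Hb*Hd*F2 + F1*F2*F3) + x3*Hd*Ha*F1)"
    using ck jj r e1 e3 e5 by algebra
  have P3: "Hb*F1*F2*F3*Ha*y3 = c*(x1*Hb*Ha*F2 + x2*Hb*Ha*F3 + x3*(-Hd*Ha*F3 - Hb*Hd*F2 + F1*F2*F3))"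
    using ck jj r e2 e3 e6 by algebra
  show "Ha*Hb*Hd*F1*F2*F3*(y1 - y2) = c * (F1*Ha*Hb + F2*Hb*Hd + F3*Hd*Ha - F1*F2*F3) * (Hb*x2 - Ha*x1)"
    using P1 P2 by algebra
  show "Ha*Hb*Hd*F1*F2*F3*(y2 - y3) = c * (F1*Ha*Hb + F2*Hb*Hd + F3*Hd*Ha - F1*F2*F3) * (Hd*x3 - Hb*x2)"
    using P2 P3 by algebra
qed

lemma alg_ex:
  fixes c F1 F2 F3 Fad Fbpd Fapd Fapb Ha Hb Hd Hap Hbp :: complex
  assumes nz: "c \<noteq> 0" "F1 \<noteq> 0" "F2 \<noteq> 0" "Ha \<noteq> 0" "Hb \<noteq> 0" "Hd \<noteq> 0"
  defines "x12 \<equiv> \<i>*Hb/F1" and "x23 \<equiv> - \<i>*Hb/F2"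
  shows "(F1*x12 - inverse c*F1*Ha*Hb*0 = \<i>*(Hb*1 - Ha*0)) \<and> (Fad*0 - inverse c*Fad*Ha*Hd*0 = \<i>*(Hd*0 - Ha*0)) \<and> (F2*x23 - inverse c*F2*Hb*Hd*0 = \<i>*(Hd*0 - Hb*1)) \<and> (Fbpd*0 - inverse c*Fbpd*Hbp*Hd*x12 = \<i>*(Hd*((- inverse c*Fbpd*Hbp*Hd*x12)/(\<i>*Hd)) - Hbp*0)) \<and> (Fapd*x23 - inverse c*Fapd*Hap*Hd*x12 = \<i>*(Hd*((Fapd*x23 - inverse c*Fapd*Hap*Hd*x12 + \<i>*Hap)/(\<i>*Hd)) - Hap*1)) \<and> (Fapb*x23 - inverse c*Fapb*Hap*Hb*0 = \<i>*(Hb*((Fapb*x23)/(\<i>*Hb)) - Hap*0))"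
  using nz unfolding x12_def x23_def by (intro conjI; simp add: field_simps)

lemma nondeg_sym: "nondeg a b \<Longrightarrow> nondeg b a"
  unfolding nondeg_def
proof
  fix k :: int
  assume "\<forall>k::int. a - b \<noteq> of_int k * pi"
  hence "a - b \<noteq> of_int (-k) * pi" by blast
  thus "b - a \<noteq> of_int k * pi" by (simp add: algebra_simps)
qed

lemma cis_pi_shift: "cis (x + pi) = - cis x"
  by (simp add: cis_mult[symmetric])

lemma qe:
  fixes f g :: "real \<Rightarrow> real \<Rightarrow> complex" and h :: "real \<Rightarrow> complex"
  assumes f_per1: "\<And>a b. f (a + 2 * pi) b = f a b"
    and f_per2: "\<And>a b. f a (b + 2 * pi) = f a b"
    and g_per1: "\<And>a b. g (a + 2 * pi) b = g a b"
    and g_per2: "\<And>a b. g a (b + 2 * pi) = g a b"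
    and h_per: "\<And>a. h (a + 2 * pi) = h a"
    and W: "W - B = cis t" and W': "W' - B = cis t'"
  shows "quad_eq f g h B B' W W' xB xB' xW xW' \<longleftrightarrow>
         f t t' * xB' - g t t' * xB = \<i> * (h t' * xW' - h t * xW)"
proof -
  obtain k where k: "edge_label B W = t + 2 * pi * of_int k" using label_ex[OF W] by blast
  obtain k' where k': "edge_label B W' = t' + 2 * pi * of_int k'" using label_ex[OF W'] by blast
  have F: "f (t + 2 * pi * of_int k) (t' + 2 * pi * of_int k') = f t t'"
  proof -
    have "f (t + 2 * pi * of_int k) (t' + 2 * pi * of_int k') = f t (t' + 2 * pi * of_int k')"
      by (rule per_int[where \<phi> = "\<lambda>x. f x (t' + 2 * pi * of_int k')"]) (rule f_per1)
    also have "\<dots> = f t t'" by (rule per_int[where \<phi> = "\<lambda>y. f t y"]) (rule f_per2)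
    finally show ?thesis .
  qed
  have G: "g (t + 2 * pi * of_int k) (t' + 2 * pi * of_int k') = g t t'"
  proof -
    have "g (t + 2 * pi * of_int k) (t' + 2 * pi * of_int k') = g t (t' + 2 * pi * of_int k')"
      by (rule per_int[where \<phi> = "\<lambda>x. g x (t' + 2 * pi * of_int k')"]) (rule g_per1)
    also have "\<dots> = g t t'" by (rule per_int[where \<phi> = "\<lambda>y. g t y"]) (rule g_per2)
    finally show ?thesis .
  qed
  have H1: "h (t + 2 * pi * of_int k) = h t" by (rule per_int) (rule h_per)
  have H2: "h (t' + 2 * pi * of_int k') = h t'" by (rule per_int) (rule h_per)
  show ?thesis unfolding quad_eq_def Let_def k k' F G H1 H2 ..
qed

theorem theorem1:
  fixes f g :: "real \<Rightarrow> real \<Rightarrow> complex" and h :: "real \<Rightarrow> complex" and c :: complex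
  assumes c_nz: "c \<noteq> 0"
    and f_per1: "\<And>a b. f (a + 2 * pi) b = f a b"
    and f_per2: "\<And>a b. f a (b + 2 * pi) = f a b"
    and g_per1: "\<And>a b. g (a + 2 * pi) b = g a b"
    and g_per2: "\<And>a b. g a (b + 2 * pi) = g a b"
    and h_per: "\<And>a. h (a + 2 * pi) = h a"
    and f_anti: "\<And>a b. f a b = - f b a"
    and g_anti: "\<And>a b. g a b = - g b a"
    and h_prod: "\<And>a. h a * h (a + pi) = c"
    and f_prod: "\<And>a b. nondeg a b \<Longrightarrow> f a b * f (a + pi) b = - c"
    and g_def: "\<And>a b. g a b = inverse c * f a b * h a * h b"
  shows "((\<forall>a b d. nondeg a b \<and> nondeg b d \<and> nondeg d a \<longrightarrow> cube_consistent f g h a b d)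
          \<longleftrightarrow>
          (\<forall>a b d. nondeg a b \<and> nondeg b d \<and> nondeg d a \<longrightarrow>
             f a b * h a * h b + f b d * h b * h d + f d a * h d * h a
               = f a b * f b d * f d a))
       \<and> ((\<forall>a b d. nondeg a b \<and> nondeg b d \<and> nondeg d a \<longrightarrow>
             f a b * h a * h b + f b d * h b * h d + f d a * h d * h a
               = f a b * f b d * f d a)
          \<longleftrightarrow>
          (\<forall>a b d. nondeg a b \<and> nondeg b d \<and> nondeg d a \<longrightarrow>
             g a b + g b d + g d a = inverse c * f a b * f b d * f d a))"
proof -
  note QE = qe[where f=f and g=g and h=h, OF f_per1 f_per2 g_per1 g_per2 h_per]
  have hnz: "h x \<noteq> 0" for x using h_prod[of x] c_nz by auto
  have key: "cube_consistent f g h a b d \<longleftrightarrow>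
             f a b * h a * h b + f b d * h b * h d + f d a * h d * h a = f a b * f b d * f d a"
    if nab: "nondeg a b" and nbd: "nondeg b d" and nda: "nondeg d a" for a b d
  proof -
    have nad: "nondeg a d" using nda by (rule nondeg_sym)
    have r1: "f a d = - f d a" by (rule f_anti)
    have r2: "f b d * f (b + pi) d = - c" using f_prod[OF nbd] .
    have r3: "f a d * f (a + pi) d = - c" using f_prod[OF nad] .
    have r4: "f a b * f (a + pi) b = - c" using f_prod[OF nab] .
    have F1: "f a b \<noteq> 0" using r4 c_nz by auto
    have F2: "f b d \<noteq> 0" using r2 c_nz by auto
    have F3: "f d a \<noteq> 0" using r3 r1 c_nz by auto
    have d1: "cis a - 0 = cis a" "cis b - 0 = cis b" "cis d - 0 = cis d" by simp_all
    have d2: "cis a - (cis a + cis b) = cis (b + pi)" "cis a + cis b + cis d - (cis a + cis b) = cis d"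
      "cis b - (cis a + cis b) = cis (a + pi)"
      "cis d - (cis a + cis d) = cis (a + pi)" "cis a + cis b + cis d - (cis a + cis d) = cis b"
      by (simp_all add: cis_pi_shift)
    have e: "cube_consistent f g h a b d \<longleftrightarrow>
      (\<forall>x0 x1 x2 x3 x12 x13 x23 y1 y2 y3.
        f a b * x12 - inverse c * f a b * h a * h b * x0 = \<i> * (h b * x2 - h a * x1) \<and>
        f a d * x13 - inverse c * f a d * h a * h d * x0 = \<i> * (h d * x3 - h a * x1) \<and>
        f b d * x23 - inverse c * f b d * h b * h d * x0 = \<i> * (h d * x3 - h b * x2) \<and>
        f (b + pi) d * x13 - inverse c * f (b + pi) d * h (b + pi) * h d * x12 = \<i> * (h d * y1 - h (b + pi) * x1) \<and>
        f (a + pi) d * x23 - inverse c * f (a + pi) d * h (a + pi) * h d * x12 = \<i> * (h d * y2 - h (a + pi) * x2) \<and>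
        f (a + pi) b * x23 - inverse c * f (a + pi) b * h (a + pi) * h b * x13 = \<i> * (h b * y3 - h (a + pi) * x3)
        \<longrightarrow> y1 = y2 \<and> y2 = y3)"
      unfolding cube_consistent_def Let_def
      by (simp only: QE[OF d1(1) d1(2)] QE[OF d1(1) d1(3)] QE[OF d1(2) d1(3)]
          QE[OF d2(1) d2(2)] QE[OF d2(3) d2(2)] QE[OF d2(4) d2(5)] g_def)
    have ck: "c * inverse c = 1" using c_nz by simp
    have ii: "\<i> * \<i> = -1" by simp
    note A = alg0[OF ck ii r1 r2 r3 r4 h_prod[of a] h_prod[of b]]
    show ?thesis
    proof
      assume cc: "cube_consistent f g h a b d"
      define x12 where "x12 = \<i> * h b / f a b"
      define x23 where "x23 = - \<i> * h b / f b d"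
      note X = alg_ex[OF c_nz F1 F2 hnz[of a] hnz[of b] hnz[of d], where Fad="f a d" and Fbpd="f (b + pi) d" and Hbp="h (b + pi)"
          and Fapd="f (a + pi) d" and Hap="h (a + pi)" and Fapb="f (a + pi) b", folded x12_def x23_def]
      note X1 = conjunct1[OF X] and X2 = conjunct1[OF conjunct2[OF X]]
        and X3 = conjunct1[OF conjunct2[OF conjunct2[OF X]]]
        and X4 = conjunct1[OF conjunct2[OF conjunct2[OF conjunct2[OF X]]]]
        and X5 = conjunct1[OF conjunct2[OF conjunct2[OF conjunct2[OF conjunct2[OF X]]]]]
        and X6 = conjunct2[OF conjunct2[OF conjunct2[OF conjunct2[OF conjunct2[OF X]]]]]
      define Y1 where "Y1 = ((- inverse c*f (b + pi) d*h (b + pi)*h d*x12)/(\<i>*h d))"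
      define Y2 where "Y2 = ((f (a + pi) d*x23 - inverse c*f (a + pi) d*h (a + pi)*h d*x12 + \<i>*h (a + pi))/(\<i>*h d))"
      have eq: "Y1 = Y2"
        using cc[unfolded e, rule_format, OF X] unfolding Y1_def Y2_def
        by blast
      have A1: "h a * h b * h d * f a b * f b d * f d a * (Y1 - Y2) =
          c * (f a b * h a * h b + f b d * h b * h d + f d a * h d * h a - f a b * f b d * f d a) * (h b * 1 - h a * 0)"
        unfolding Y1_def Y2_def by (rule A(1)[OF X1 X2 X3 X4 X5 X6])
      have "c * (f a b * h a * h b + f b d * h b * h d + f d a * h d * h a - f a b * f b d * f d a) * h b = 0"
        using A1 unfolding eq by simp
      then have "f a b * h a * h b + f b d * h b * h d + f d a * h d * h a - f a b * f b d * f d a = 0"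
        using c_nz hnz[of b] by simp
      then show "f a b * h a * h b + f b d * h b * h d + f d a * h d * h a = f a b * f b d * f d a"
        by simp
    next
      assume E: "f a b * h a * h b + f b d * h b * h d + f d a * h d * h a = f a b * f b d * f d a"
      have nzp: "h a * h b * h d * f a b * f b d * f d a \<noteq> 0" using F1 F2 F3 hnz by simp
      show "cube_consistent f g h a b d" unfolding e
        apply (intro allI impI, elim conjE)
        subgoal premises p for x0 x1 x2 x3 x12 x13 x23 y1 y2 y3
        proof -
          note B = A[OF p(1) p(2) p(3) p(4) p(5) p(6)]
          have "h a * h b * h d * f a b * f b d * f d a * (y1 - y2) = 0" using B(1) E by simp
          moreover have "h a * h b * h d * f a b * f b d * f d a * (y2 - y3) = 0" using B(2) E by simp
          ultimately show "y1 = y2 \<and> y2 = y3" using nzp by simp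
        qed
        done
    qed
  qed
  have key2: "(f a b * h a * h b + f b d * h b * h d + f d a * h d * h a = f a b * f b d * f d a) \<longleftrightarrow>
              (g a b + g b d + g d a = inverse c * f a b * f b d * f d a)" for a b d
  proof -
    have "g a b + g b d + g d a = inverse c * (f a b * h a * h b + f b d * h b * h d + f d a * h d * h a)"
      unfolding g_def by (simp add: algebra_simps)
    moreover have "inverse c * f a b * f b d * f d a = inverse c * (f a b * f b d * f d a)" by (simp add: algebra_simps)
    ultimately show ?thesis using c_nz by (simp add: mult.assoc)
  qed
  show ?thesis using key key2 by blast
qed

end
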